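(* In the $N$-customer elementary Indian Buffet Game, assume homogeneity: $u_i(q,n)=u(q,n)$ for all customers $i$, all $q\in Q$ and all $n$, where $u(q,n)$ is non-increasing in $n$ for each $q$. Let $d^*=(d_1^*,\dots,d_N^* )$ be the equilibrium path generated by the strategies $\sigma$, i.e. $n_1=0$, $d_i^*=\sigma_i(n_i)$, $n_{i+1}=n_i+d_i^*$, and let $n^*=\sum_{k=1}^N d_k^*$. Then $d_i^*=1$ if and only if $1\le i\le n^*$.
   Context: Elementary Indian Buffet Game: a single dish whose unknown state $\theta$ lies in a finite set $\Theta$; the quality $q$ lies in a finite set $Q$ with probability mass function $f(q\mid\theta)$ given $\theta$; common belief $p=\{p(\theta)\}_{\theta\in\Theta}$. Customers $1,\dots,N$ decide sequentially whether to request the dish; customer $i$ observes $n_i=\sum_{k<i}d_k$. With utility $u_i(q,n)$ define $\bar U_i(n)=\sum_{\theta\in\Theta}\sum_{q\in Q}u_i(q,n)f(q\mid\theta)p(\theta)$. Recursive procedure $A(n,i)$ returning $(d,m)$: if $i=N$, return $d=1$ if $\bar U_N(n+1)>0$ and $d=0$ otherwise, with $m=0$. If $i<N$: let $(d',m')=A(n+1,i+1)$ and $m=m'+d'$; if $\bar U_i(n+m+1)>0$ return $(1,m)$; otherwise let $(d'',m'')=A(n,i+1)$ and return $(0,m''+d'')$. Define $\sigma_i(n)$ as the first component of $A(n,i)$. *)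

theory Defs
  imports Complex_Main
begin

definition Ubar :: "'th set \<Rightarrow> 'q set \<Rightarrow> ('q \<Rightarrow> 'th \<Rightarrow> real) \<Rightarrow> ('th \<Rightarrow> real)
    \<Rightarrow> ('q \<Rightarrow> nat \<Rightarrow> real) \<Rightarrow> nat \<Rightarrow> real" where
  "Ubar Th Q f p u n = (\<Sum>th\<in>Th. \<Sum>q\<in>Q. u q n * f q th * p th)"

function A :: "(nat \<Rightarrow> nat \<Rightarrow> real) \<Rightarrow> nat \<Rightarrow> nat \<Rightarrow> nat \<Rightarrow> nat \<times> nat" where
  "A U N n i =
     (if N \<le> i then ((if U N (n + 1) > 0 then 1 else 0), 0)
      else (let (d', m') = A U N (n + 1) (i + 1); m = m' + d' in
            if U i (n + m + 1) > 0 then (1, m)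
            else (let (d'', m'') = A U N n (i + 1) in (0, m'' + d''))))"
  by pat_completeness auto
termination by (relation "measure (\<lambda>(U, N, n, i). N - i)") auto

definition sigma :: "(nat \<Rightarrow> nat \<Rightarrow> real) \<Rightarrow> nat \<Rightarrow> nat \<Rightarrow> nat \<Rightarrow> nat" where
  "sigma U N i n = fst (A U N n i)"

end

theory Submission
  imports Defs
begin

declare A.simps[simp del]

lemma A_char:
  fixes V :: "nat \<Rightarrow> real"
  assumes H: "\<forall>k. 1 \<le> k \<and> k \<le> B \<longrightarrow> (V k > 0 \<longleftrightarrow> k \<le> t)"
  shows "U = (\<lambda>_. V) \<Longrightarrow> n + (N - i) + 1 \<le> B \<Longrightarrow>
    A U N n i = ((if n < t then 1 else 0), min (t - (n + (if n < t then 1 else 0))) (N - i))"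
proof (induction U N n i rule: A.induct)
  case (1 U N n i)
  show ?case
  proof (cases "N \<le> i")
    case True
    then show ?thesis using 1(3,4) H by (subst A.simps) auto
  next
    case False
    have IH1: "A U N (n+1) (i+1) = ((if n+1 < t then 1 else 0), min (t - (n + 1 + (if n+1 < t then 1 else 0))) (N - (i+1)))"
      using 1(1)[OF False] 1(3,4) False by auto
    show ?thesis
    proof (cases "n + 1 < t")
      case True
      have "V (n + (min (t - (n + 2)) (N - (i+1)) + 1) + 1) > 0"
        using H 1(4) False True by auto
      then show ?thesis using IH1 True False 1(3)
        by (subst A.simps) (auto simp: Let_def min_def)
    next
      case nt: False
      show ?thesis
      proof (cases "n < t")
        case True
        then have "V (n+1) > 0" using H 1(4) False by auto
        then show ?thesis using IH1 True nt False 1(3)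
          by (subst A.simps) (auto simp: Let_def)
      next
        case f2: False
        then have nv: "\<not> V (n+1) > 0" using H 1(4) False by auto
        have IH2: "A U N n (i+1) = ((if n < t then 1 else 0), min (t - (n + (if n < t then 1 else 0))) (N - (i+1)))"
          apply (rule 1(2)[OF False refl prod.collapse refl])
          using IH1 nv nt 1(3,4) False by auto
        from nv show ?thesis using IH1 IH2 f2 nt False 1(3)
          by (subst A.simps) (auto simp: Let_def)
      qed
    qed
  qed
qed

theorem lemma1:
  fixes Th :: "'th set" and Q :: "'q set"
    and f :: "'q \<Rightarrow> 'th \<Rightarrow> real" and p :: "'th \<Rightarrow> real"
    and u :: "'q \<Rightarrow> nat \<Rightarrow> real" and N :: nat
    and d :: "nat \<Rightarrow> nat" and n :: "nat \<Rightarrow> nat"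
  assumes "finite Th" and "finite Q"
    and "\<forall>th\<in>Th. \<forall>q\<in>Q. f q th \<ge> 0"
    and "\<forall>th\<in>Th. (\<Sum>q\<in>Q. f q th) = 1"
    and "\<forall>th\<in>Th. p th \<ge> 0" and "(\<Sum>th\<in>Th. p th) = 1"
    and "\<forall>q\<in>Q. \<forall>a b. a \<le> b \<longrightarrow> u q b \<le> u q a"
    and "n 1 = 0"
    and "\<forall>i\<in>{1..N}. d i = sigma (\<lambda>i. Ubar Th Q f p u) N i (n i) \<and> n (i + 1) = n i + d i"
  shows "\<forall>i\<in>{1..N}. d i = 1 \<longleftrightarrow> 1 \<le> i \<and> i \<le> (\<Sum>k=1..N. d k)"
proof -
  define V where "V = Ubar Th Q f p u"
  have mono: "V b \<le> V a" if "a \<le> b" for a b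
    unfolding V_def Ubar_def
  proof (rule sum_mono, rule sum_mono)
    fix th q assume "th \<in> Th" "q \<in> Q"
    then show "u q b * f q th * p th \<le> u q a * f q th * p th"
      using assms(3,5,7) that by (intro mult_right_mono) auto
  qed
  define S where "S = {0} \<union> {k\<in>{1..N}. V k > 0}"
  define t where "t = Max S"
  have fS: "finite S" "S \<noteq> {}" unfolding S_def by auto
  have tS: "t \<in> S" unfolding t_def using fS by simp
  have H: "\<forall>k. 1 \<le> k \<and> k \<le> N \<longrightarrow> (V k > 0 \<longleftrightarrow> k \<le> t)"
  proof (intro allI impI)
    fix k assume k: "1 \<le> k \<and> k \<le> N"
    show "V k > 0 \<longleftrightarrow> k \<le> t"
    proof
      assume "V k > 0" then have "k \<in> S" using k unfolding S_def by auto
      then show "k \<le> t" unfolding t_def using fS by simp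
    next
      assume "k \<le> t"
      with k have "t \<noteq> 0" by auto
      with tS have "V t > 0" unfolding S_def by auto
      with mono[OF \<open>k \<le> t\<close>] show "V k > 0" by linarith
    qed
  qed
  have step: "d i = (if i \<le> t then 1 else 0) \<and> n (i+1) = min i t"
    if "i \<in> {1..N}" for i
    using that
  proof (induction i rule: nat_less_induct)
    case (1 i)
    have ni: "n i = min (i - 1) t"
    proof (cases "i = 1")
      case True then show ?thesis using assms(8) by simp
    next
      case False
      then have "i - 1 \<in> {1..N}" "i - 1 < i" using 1(2) by auto
      then have "n (i - 1 + 1) = min (i - 1) t" using 1(1) by blast
      then show ?thesis using False 1(2) by simp
    qed
    have "d i = sigma (\<lambda>i. Ubar Th Q f p u) N i (n i)" using assms(9) 1(2) by blast
    also have "\<dots> = fst (A (\<lambda>_. V) N (n i) i)"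
      unfolding sigma_def V_def by (rule refl)
    also have "\<dots> = (if n i < t then 1 else 0)"
      using A_char[OF H, where U="\<lambda>_. V" and n="n i" and N=N and i=i] ni 1(2) by auto
    finally have di: "d i = (if i \<le> t then 1 else 0)" using ni 1(2) by auto
    moreover have "n (i+1) = n i + d i" using assms(9) 1(2) by blast
    ultimately show ?case using ni 1(2) by auto
  qed
  have sum: "(\<Sum>k=1..N. d k) = min N t"
  proof -
    have "(\<Sum>k=1..N. d k) = (\<Sum>k=1..N. (if k \<le> t then 1 else 0))"
      using step by (intro sum.cong) auto
    also have "\<dots> = card {k\<in>{1..N}. k \<le> t}" by (simp add: sum.If_cases Int_def)
    also have "{k\<in>{1..N}. k \<le> t} = {1..min N t}" by auto
    finally show ?thesis by simp
  qed
  show ?thesis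
  proof
    fix i assume i: "i \<in> {1..N}"
    from step[OF i] have "d i = (if i \<le> t then 1 else 0)" by blast
    then show "d i = 1 \<longleftrightarrow> 1 \<le> i \<and> i \<le> (\<Sum>k=1..N. d k)" using i sum by auto
  qed
qed

end
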